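(* If $\rho\equiv\sum_{n=1}^N \frac{r_n}{C_n}\le 1$, then every packet $p^{g,j}$ of the aggregate flow has delay $d^{g,j}-a^{g,j}\le \sum_{n=1}^N\frac{\sigma_n}{C_n}$. Moreover, the bound is tight: there exist arrival patterns satisfying the constraints (e.g. each class $m$ releasing a burst of total size $\sigma_m$ at time $0$) for which some packet has delay exactly $\sum_n \sigma_n/C_n$.
   Context: A multiclass FIFO system serves packets from $N$ classes. Class $n$ has constant service rate $C_n>0$. All packets, indexed in order of arrival (ties broken arbitrarily) as $p^{g,1},p^{g,2},\dots$ with arrival times $0\le a^{g,1}\le a^{g,2}\le\cdots$ and lengths $l^{g,j}>0$, depart at $d^{g,j}=\max\{a^{g,j},d^{g,j-1}\}+l^{g,j}/C_{c(j)}$, $d^{g,0}=0$, where $c(j)$ is the class of $p^{g,j}$ (work-conserving FIFO, initially empty, infinite buffer). $A_n(s,t)$ is the total length of class-$n$ packets arriving in $[s,t]$. Each class satisfies the leaky-bucket constraint $A_n(s,t)\le r_n(t-s)+\sigma_n$ for all $0\le s\le t$, with constants $r_n,\sigma_n\ge 0$. *)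

theory Defs
  imports Main "HOL-Library.Extended_Real"
begin

text \<open>Packets are indexed 1..K in order of arrival; a j = arrival time, l j = length,
  c j = class (in {1..N}); C n = service rate of class n.\<close>

fun depart :: "(nat \<Rightarrow> real) \<Rightarrow> (nat \<Rightarrow> real) \<Rightarrow> (nat \<Rightarrow> nat) \<Rightarrow> (nat \<Rightarrow> real) \<Rightarrow> nat \<Rightarrow> real" where
  "depart a l c C 0 = 0"
| "depart a l c C (Suc j) = max (a (Suc j)) (depart a l c C j) + l (Suc j) / C (c (Suc j))"

definition arrivals :: "nat \<Rightarrow> (nat \<Rightarrow> real) \<Rightarrow> (nat \<Rightarrow> real) \<Rightarrow> (nat \<Rightarrow> nat) \<Rightarrow> nat \<Rightarrow> real \<Rightarrow> real \<Rightarrow> real" where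
  "arrivals K a l c n s t = (\<Sum>j\<in>{j\<in>{1..K}. c j = n \<and> s \<le> a j \<and> a j \<le> t}. l j)"

definition admissible :: "nat \<Rightarrow> (nat \<Rightarrow> real) \<Rightarrow> (nat \<Rightarrow> real) \<Rightarrow> nat \<Rightarrow> (nat \<Rightarrow> real) \<Rightarrow> (nat \<Rightarrow> real) \<Rightarrow> (nat \<Rightarrow> nat) \<Rightarrow> bool" where
  "admissible N r \<sigma> K a l c \<longleftrightarrow>
     (\<forall>j\<in>{1..K}. c j \<in> {1..N} \<and> l j > 0 \<and> 0 \<le> a j) \<and>
     (\<forall>j\<in>{1..K}. \<forall>i\<in>{1..K}. j \<le> i \<longrightarrow> a j \<le> a i) \<and>
     (\<forall>n\<in>{1..N}. \<forall>s t. 0 \<le> s \<longrightarrow> s \<le> t \<longrightarrow> arrivals K a l c n s t \<le> r n * (t - s) + \<sigma> n)"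

end

theory Submission
  imports Defs
begin

lemma busy_start:
  assumes a1: "a 1 \<ge> 0" and j: "j \<ge> 1"
  shows "\<exists>i\<in>{1..j}. depart a l c C j = a i + (\<Sum>k=i..j. l k / C (c k))"
  using j
proof (induction j)
  case 0 then show ?case by simp
next
  case (Suc j)
  show ?case
  proof (cases "j = 0")
    case True
    then show ?thesis using a1 by (intro bexI[of _ 1]) auto
  next
    case False
    then obtain i where i: "i\<in>{1..j}" "depart a l c C j = a i + (\<Sum>k=i..j. l k / C (c k))"
      using Suc.IH by auto
    show ?thesis
    proof (cases "a (Suc j) \<ge> depart a l c C j")
      case True
      then show ?thesis by (intro bexI[of _ "Suc j"]) auto
    next
      case F: False
      have "depart a l c C (Suc j) = depart a l c C j + l (Suc j) / C (c (Suc j))"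
        using F by simp
      also have "\<dots> = a i + (\<Sum>k=i..Suc j. l k / C (c k))"
        using i by (simp add: sum.cl_ivl_Suc add.assoc)
      finally show ?thesis using i by (intro bexI[of _ i]) auto
    qed
  qed
qed

lemma depart_zero:
  assumes "\<forall>k. a k = 0" and "\<forall>k\<in>{1..j}. l k / C (c k) \<ge> 0"
  shows "depart a l c C j = (\<Sum>k=1..j. l k / C (c k))"
  using assms(2)
proof (induction j)
  case 0 then show ?case by simp
next
  case (Suc j)
  have IH: "depart a l c C j = (\<Sum>k=1..j. l k / C (c k))" using Suc by auto
  have "(\<Sum>k=1..j. l k / C (c k)) \<ge> 0" using Suc.prems by (intro sum_nonneg) auto
  then have "depart a l c C (Suc j) = depart a l c C j + l (Suc j) / C (c (Suc j))"
    using IH assms(1) by (simp only: depart.simps)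
  then show ?case using IH by (simp add: sum.cl_ivl_Suc)
qed

theorem theorem1:
  fixes N :: nat and C r \<sigma> :: "nat \<Rightarrow> real"
  assumes C_pos: "\<forall>n\<in>{1..N}. C n > 0"
    and r_nonneg: "\<forall>n\<in>{1..N}. r n \<ge> 0"
    and sigma_nonneg: "\<forall>n\<in>{1..N}. \<sigma> n \<ge> 0"
    and rho: "(\<Sum>n=1..N. r n / C n) \<le> 1"
  shows "(\<forall>K a l c. admissible N r \<sigma> K a l c \<longrightarrow>
            (\<forall>j\<in>{1..K}. depart a l c C j - a j \<le> (\<Sum>n=1..N. \<sigma> n / C n)))
       \<and> ((\<exists>n\<in>{1..N}. \<sigma> n > 0) \<longrightarrow>
            (\<exists>K a l c. admissible N r \<sigma> K a l c \<and>
               (\<exists>j\<in>{1..K}. depart a l c C j - a j = (\<Sum>n=1..N. \<sigma> n / C n))))"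
proof (intro conjI allI impI ballI)
  fix K a l c j
  assume adm: "admissible N r \<sigma> K a l c" and j: "j \<in> {1..K}"
  note A = adm[unfolded admissible_def]
  have a1: "a 1 \<ge> 0" using A j by auto
  obtain i where i: "i\<in>{1..j}" and dep: "depart a l c C j = a i + (\<Sum>k=i..j. l k / C (c k))"
    using busy_start[of a j l c C, OF a1] j by auto
  have aij: "a i \<le> a j" using A i j by auto
  have ai0: "a i \<ge> 0" using A i j by auto
  have "(\<Sum>k=i..j. l k / C (c k)) = (\<Sum>n\<in>{1..N}. \<Sum>k\<in>{k. k\<in>{i..j} \<and> c k = n}. l k / C (c k))"
    by (rule sum.group[symmetric]) (use A i j in auto)
  also have "\<dots> \<le> (\<Sum>n\<in>{1..N}. arrivals K a l c n (a i) (a j) / C n)"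
  proof (rule sum_mono)
    fix n assume n: "n \<in> {1..N}"
    have "(\<Sum>k\<in>{k. k\<in>{i..j} \<and> c k = n}. l k / C (c k)) = (\<Sum>k\<in>{k. k\<in>{i..j} \<and> c k = n}. l k) / C n"
      by (simp add: sum_divide_distrib)
    also have "\<dots> \<le> arrivals K a l c n (a i) (a j) / C n"
      unfolding arrivals_def
    proof (rule divide_right_mono)
      show "0 \<le> C n" using C_pos n by (auto intro: less_imp_le)
      show "(\<Sum>k\<in>{k. k\<in>{i..j} \<and> c k = n}. l k) \<le> (\<Sum>k\<in>{k\<in>{1..K}. c k = n \<and> a i \<le> a k \<and> a k \<le> a j}. l k)"
      proof (rule sum_mono2)
        show "{k. k\<in>{i..j} \<and> c k = n} \<subseteq> {k\<in>{1..K}. c k = n \<and> a i \<le> a k \<and> a k \<le> a j}"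
          using A i j by auto
        show "\<And>b. b\<in>{k\<in>{1..K}. c k = n \<and> a i \<le> a k \<and> a k \<le> a j} - {k. k\<in>{i..j} \<and> c k = n} \<Longrightarrow> 0 \<le> l b"
          using A by (auto intro: less_imp_le)
      qed simp
    qed
    finally show "(\<Sum>k\<in>{k. k\<in>{i..j} \<and> c k = n}. l k / C (c k)) \<le> arrivals K a l c n (a i) (a j) / C n" .
  qed
  also have "\<dots> \<le> (\<Sum>n\<in>{1..N}. (r n * (a j - a i) + \<sigma> n) / C n)"
  proof (rule sum_mono)
    fix n assume n: "n \<in> {1..N}"
    show "arrivals K a l c n (a i) (a j) / C n \<le> (r n * (a j - a i) + \<sigma> n) / C n"
      using A n ai0 aij C_pos by (intro divide_right_mono) (auto intro: less_imp_le)
  qed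
  also have "\<dots> = (a j - a i) * (\<Sum>n=1..N. r n / C n) + (\<Sum>n=1..N. \<sigma> n / C n)"
    by (simp add: add_divide_distrib sum.distrib sum_distrib_left mult.commute)
  also have "\<dots> \<le> (a j - a i) + (\<Sum>n=1..N. \<sigma> n / C n)"
    using rho aij by (simp add: mult_left_le)
  finally show "depart a l c C j - a j \<le> (\<Sum>n=1..N. \<sigma> n / C n)" using dep by simp
next
  assume "\<exists>n\<in>{1..N}. \<sigma> n > 0"
  define S where "S = {n\<in>{1..N}. \<sigma> n > 0}"
  have fS: "finite S" unfolding S_def by simp
  define K where "K = card S"
  obtain h where h: "bij_betw h {1..K} S"
    using ex_bij_betw_nat_finite_1[OF fS] unfolding K_def by blast
  define a :: "nat \<Rightarrow> real" where "a = (\<lambda>_. 0)"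
  define l where "l = (\<lambda>k. \<sigma> (h k))"
  have hS: "\<And>k. k \<in> {1..K} \<Longrightarrow> h k \<in> S" using h by (auto simp: bij_betw_def)
  have inj: "inj_on h {1..K}" using h by (auto simp: bij_betw_def)
  have adm: "admissible N r \<sigma> K a l h" unfolding admissible_def
  proof (intro conjI ballI allI impI)
    fix k assume "k \<in> {1..K}" then have "h k \<in> S" by (rule hS)
    then show "h k \<in> {1..N}" "0 < l k" "0 \<le> a k" unfolding S_def l_def a_def by auto
  next
    fix j i assume "j \<in> {1..K}" "i \<in> {1..K}" "j \<le> i" then show "a j \<le> a i" by (simp add: a_def)
  next
    fix n and s t :: real assume n: "n \<in> {1..N}" and st: "0 \<le> s" "s \<le> t"
    let ?T = "{j\<in>{1..K}. h j = n \<and> s \<le> a j \<and> a j \<le> t}"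
    have "arrivals K a l h n s t \<le> \<sigma> n"
    proof (cases "?T = {}")
      case True then show ?thesis using sigma_nonneg n unfolding arrivals_def by (simp only: sum.empty)
    next
      case False
      then obtain j where jT: "j \<in> ?T" by blast
      have "?T = {j}" using jT inj by (auto dest: inj_onD)
      moreover have "h j = n" using jT by simp
      ultimately show ?thesis by (simp add: arrivals_def l_def)
    qed
    also have "\<dots> \<le> r n * (t - s) + \<sigma> n" using r_nonneg n st by simp
    finally show "arrivals K a l h n s t \<le> r n * (t - s) + \<sigma> n" .
  qed
  have K1: "K \<ge> 1" unfolding K_def using fS \<open>\<exists>n\<in>{1..N}. \<sigma> n > 0\<close>
    by (metis (mono_tags, lifting) S_def card_0_eq empty_iff less_one mem_Collect_eq not_le)
  have "depart a l h C K = (\<Sum>k=1..K. l k / C (h k))"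
  proof (rule depart_zero)
    show "\<forall>k. a k = 0" by (simp add: a_def)
    show "\<forall>k\<in>{1..K}. 0 \<le> l k / C (h k)"
    proof
      fix k assume "k \<in> {1..K}" then have "h k \<in> S" by (rule hS)
      then show "0 \<le> l k / C (h k)" using C_pos unfolding S_def l_def by (auto intro!: divide_nonneg_pos less_imp_le)
    qed
  qed
  also have "\<dots> = (\<Sum>n\<in>S. \<sigma> n / C n)"
    unfolding l_def by (rule sum.reindex_bij_betw[OF h])
  also have "\<dots> = (\<Sum>n=1..N. \<sigma> n / C n)"
    by (rule sum.mono_neutral_left) (use sigma_nonneg in \<open>auto simp: S_def\<close>)
  finally have "depart a l h C K - a K = (\<Sum>n=1..N. \<sigma> n / C n)" by (simp add: a_def)
  then show "\<exists>K a l c. admissible N r \<sigma> K a l c \<and>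
               (\<exists>j\<in>{1..K}. depart a l c C j - a j = (\<Sum>n=1..N. \<sigma> n / C n))"
    using adm K1 by (intro exI[of _ K] exI[of _ a] exI[of _ l] exI[of _ h]) auto
qed

end
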